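(* Let $(A,R)$, $(B,S)$ be uniform preorders, $f:(A,R)\to(B,S)$ a monotone map, and $g:B\to A$ a function. The following are equivalent: (i) $g$ is a monotone map $(B,S)\to(A,R)$ and is right adjoint to $f$ in $\mathsf{UOrd}$ (i.e. $\mathrm{id}_A\le g\circ f$ and $f\circ g\le \mathrm{id}_B$); (ii) (1) the relation $\{(f(g(b)),b)\mid b\in B\}$ is in $S$, and (2) for all $s\in S$ the relation $s^*=\{(a,gb)\mid (fa,b)\in s\}$ is in $R$. Moreover, if $S_0\subseteq S$ is a basis of $S$, then it suffices to verify condition (2) for $s\in S_0$.
   Context: A uniform preorder is a pair $(A,R)$ with $A$ a set and $R\subseteq P(A\times A)$ such that $\mathrm{id}_A\in R$, $s\circ r\in R$ whenever $r,s\in R$, and $s\in R$ whenever $r\in R$ and $s\subseteq r$. A monotone map $f:(A,R)\to(B,S)$ is a function $f:A\to B$ with $\{(fa,fa')\mid (a,a')\in r\}\in S$ for all $r\in R$; for monotone $f,g:(A,R)\to(B,S)$ one sets $f\le g$ iff $\{(fa,ga)\mid a\in A\}\in S$. This defines the locally ordered category $\mathsf{UOrd}$. A basis of $(B,S)$ is a subset $S_0\subseteq S$ such that every $s\in S$ is contained in some $s_0\in S_0$. *)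

theory Defs
  imports Main
begin

definition uniform_preorder :: "'a set \<Rightarrow> ('a \<times> 'a) set set \<Rightarrow> bool" where
  "uniform_preorder A R \<longleftrightarrow>
     R \<subseteq> Pow (A \<times> A) \<and>
     Id_on A \<in> R \<and>
     (\<forall>r\<in>R. \<forall>s\<in>R. r O s \<in> R) \<and>
     (\<forall>r\<in>R. \<forall>s. s \<subseteq> r \<longrightarrow> s \<in> R)"

definition monotone_map ::
  "'a set \<Rightarrow> ('a \<times> 'a) set set \<Rightarrow> 'b set \<Rightarrow> ('b \<times> 'b) set set \<Rightarrow> ('a \<Rightarrow> 'b) \<Rightarrow> bool" where
  "monotone_map A R B S f \<longleftrightarrow>
     (\<forall>a\<in>A. f a \<in> B) \<and> (\<forall>r\<in>R. {(f a, f a') | a a'. (a, a') \<in> r} \<in> S)"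

definition uord_le :: "'a set \<Rightarrow> ('b \<times> 'b) set set \<Rightarrow> ('a \<Rightarrow> 'b) \<Rightarrow> ('a \<Rightarrow> 'b) \<Rightarrow> bool" where
  "uord_le A S f g \<longleftrightarrow> {(f a, g a) | a. a \<in> A} \<in> S"

definition is_basis :: "('b \<times> 'b) set set \<Rightarrow> ('b \<times> 'b) set set \<Rightarrow> bool" where
  "is_basis S S0 \<longleftrightarrow> S0 \<subseteq> S \<and> (\<forall>s\<in>S. \<exists>s0\<in>S0. s \<subseteq> s0)"

definition pull_rel :: "'a set \<Rightarrow> ('a \<Rightarrow> 'b) \<Rightarrow> ('b \<Rightarrow> 'a) \<Rightarrow> ('b \<times> 'b) set \<Rightarrow> ('a \<times> 'a) set" where
  "pull_rel A f g s = {(a, g b) | a b. a \<in> A \<and> (f a, b) \<in> s}"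

end

theory Submission
  imports Defs
begin

theorem lemma2p1:
  fixes A :: "'a set" and R :: "('a \<times> 'a) set set"
    and B :: "'b set" and S :: "('b \<times> 'b) set set"
    and f :: "'a \<Rightarrow> 'b" and g :: "'b \<Rightarrow> 'a"
  assumes "uniform_preorder A R" and "uniform_preorder B S"
    and "monotone_map A R B S f"
    and "\<forall>b\<in>B. g b \<in> A"
  shows "((monotone_map B S A R g \<and> uord_le A R id (g \<circ> f) \<and> uord_le B S (f \<circ> g) id)
           \<longleftrightarrow> ({(f (g b), b) | b. b \<in> B} \<in> S \<and> (\<forall>s\<in>S. pull_rel A f g s \<in> R)))
         \<and> (\<forall>S0. is_basis S S0 \<longrightarrow>
           ({(f (g b), b) | b. b \<in> B} \<in> S \<and> (\<forall>s\<in>S. pull_rel A f g s \<in> R))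
           \<longleftrightarrow> ({(f (g b), b) | b. b \<in> B} \<in> S \<and> (\<forall>s\<in>S0. pull_rel A f g s \<in> R)))"
proof -
  have U1: "R \<subseteq> Pow (A \<times> A) \<and> Id_on A \<in> R \<and> (\<forall>r\<in>R. \<forall>s\<in>R. r O s \<in> R) \<and> (\<forall>r\<in>R. \<forall>s. s \<subseteq> r \<longrightarrow> s \<in> R)"
    using assms(1) unfolding uniform_preorder_def .
  have U2: "S \<subseteq> Pow (B \<times> B) \<and> Id_on B \<in> S \<and> (\<forall>r\<in>S. \<forall>s\<in>S. r O s \<in> S) \<and> (\<forall>r\<in>S. \<forall>s. s \<subseteq> r \<longrightarrow> s \<in> S)"
    using assms(2) unfolding uniform_preorder_def .
  have R1: "\<And>r s. r \<in> R \<Longrightarrow> s \<in> R \<Longrightarrow> r O s \<in> R" using U1 by simp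
  have R2: "\<And>r s. r \<in> R \<Longrightarrow> s \<subseteq> r \<Longrightarrow> s \<in> R" using U1 by simp
  have RI: "Id_on A \<in> R" using U1 by simp
  have S1: "\<And>r s. r \<in> S \<Longrightarrow> s \<in> S \<Longrightarrow> r O s \<in> S" using U2 by simp
  have SP: "S \<subseteq> Pow (B \<times> B)" using U2 by simp
  have M: "(\<forall>a\<in>A. f a \<in> B) \<and> (\<forall>r\<in>R. {(f a, f a') | a a'. (a, a') \<in> r} \<in> S)"
    using assms(3) unfolding monotone_map_def .
  have fm: "\<And>r. r \<in> R \<Longrightarrow> {(f a, f a') | a a'. (a, a') \<in> r} \<in> S" using M by simp
  have pmono: "\<And>s t. s \<subseteq> t \<Longrightarrow> pull_rel A f g s \<subseteq> pull_rel A f g t"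
    unfolding pull_rel_def by blast
  let ?e = "{(f (g b), b) | b. b \<in> B}"
  have part1: "(monotone_map B S A R g \<and> uord_le A R id (g \<circ> f) \<and> uord_le B S (f \<circ> g) id)
           \<longleftrightarrow> (?e \<in> S \<and> (\<forall>s\<in>S. pull_rel A f g s \<in> R))"
  proof
    assume H: "monotone_map B S A R g \<and> uord_le A R id (g \<circ> f) \<and> uord_le B S (f \<circ> g) id"
    have e: "?e \<in> S" using H unfolding uord_le_def by simp
    have eta: "{(a, g (f a)) | a. a \<in> A} \<in> R" using H unfolding uord_le_def by simp
    have gm: "\<And>s. s \<in> S \<Longrightarrow> {(g b, g b') | b b'. (b, b') \<in> s} \<in> R"
      using H unfolding monotone_map_def by blast
    have "\<forall>s\<in>S. pull_rel A f g s \<in> R"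
    proof
      fix s assume s: "s \<in> S"
      have "pull_rel A f g s \<subseteq> {(a, g (f a)) | a. a \<in> A} O {(g b, g b') | b b'. (b, b') \<in> s}"
        unfolding pull_rel_def by blast
      then show "pull_rel A f g s \<in> R" by (rule R2[OF R1[OF eta gm[OF s]]])
    qed
    then show "?e \<in> S \<and> (\<forall>s\<in>S. pull_rel A f g s \<in> R)" using e by blast
  next
    assume H: "?e \<in> S \<and> (\<forall>s\<in>S. pull_rel A f g s \<in> R)"
    have gm: "monotone_map B S A R g"
      unfolding monotone_map_def
    proof (intro conjI ballI)
      fix b assume "b \<in> B" then show "g b \<in> A" using assms(4) by blast
    next
      fix s assume s: "s \<in> S"
      have "?e O s \<in> S" using S1[OF _ s] H by blast
      hence P: "pull_rel A f g (?e O s) \<in> R" using H by blast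
      have "{(g b, g b') | b b'. (b, b') \<in> s} \<subseteq> pull_rel A f g (?e O s)"
      proof
        fix x assume "x \<in> {(g b, g b') | b b'. (b, b') \<in> s}"
        then obtain b b' where x: "x = (g b, g b')" and bb: "(b, b') \<in> s" by blast
        have bB: "b \<in> B" using bb s SP by blast
        have "(f (g b), b') \<in> ?e O s" using bB bb by blast
        then show "x \<in> pull_rel A f g (?e O s)" unfolding pull_rel_def x
          using assms(4) bB by blast
      qed
      then show "{(g b, g b') | b b'. (b, b') \<in> s} \<in> R" by (rule R2[OF P])
    qed
    have fI: "{(f a, f a') | a a'. (a, a') \<in> Id_on A} \<in> S" using fm RI by blast
    hence P: "pull_rel A f g {(f a, f a') | a a'. (a, a') \<in> Id_on A} \<in> R" using H by blast
    have "{(a, g (f a)) | a. a \<in> A} \<subseteq> pull_rel A f g {(f a, f a') | a a'. (a, a') \<in> Id_on A}"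
      unfolding pull_rel_def by blast
    hence "{(a, g (f a)) | a. a \<in> A} \<in> R" by (rule R2[OF P])
    then show "monotone_map B S A R g \<and> uord_le A R id (g \<circ> f) \<and> uord_le B S (f \<circ> g) id"
      using gm H unfolding uord_le_def by simp
  qed
  have part2: "\<forall>S0. is_basis S S0 \<longrightarrow>
           (?e \<in> S \<and> (\<forall>s\<in>S. pull_rel A f g s \<in> R))
           \<longleftrightarrow> (?e \<in> S \<and> (\<forall>s\<in>S0. pull_rel A f g s \<in> R))"
  proof (intro allI impI)
    fix S0 assume b: "is_basis S S0"
    have "(\<forall>s\<in>S. pull_rel A f g s \<in> R) \<longleftrightarrow> (\<forall>s\<in>S0. pull_rel A f g s \<in> R)"
    proof
      assume "\<forall>s\<in>S. pull_rel A f g s \<in> R" then show "\<forall>s\<in>S0. pull_rel A f g s \<in> R"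
        using b unfolding is_basis_def by blast
    next
      assume H0: "\<forall>s\<in>S0. pull_rel A f g s \<in> R"
      show "\<forall>s\<in>S. pull_rel A f g s \<in> R"
      proof
        fix s assume "s \<in> S"
        then obtain s0 where "s0 \<in> S0" "s \<subseteq> s0" using b unfolding is_basis_def by blast
        then show "pull_rel A f g s \<in> R" using H0 pmono R2 by meson
      qed
    qed
    then show "(?e \<in> S \<and> (\<forall>s\<in>S. pull_rel A f g s \<in> R))
           \<longleftrightarrow> (?e \<in> S \<and> (\<forall>s\<in>S0. pull_rel A f g s \<in> R))" by blast
  qed
  show ?thesis using part1 part2 by blast
qed

end
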